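(* Let $E$, $F$, $H_0$, $H_1$ be Hilbert spaces and let $L:E\to F$, $r_0:E\to H_0$, $r_1:E\to H_1$ be bounded linear maps such that $r_j\oplus L:E\to H_j\oplus F$ is an isomorphism for $j=0$ and for $j=1$. Let $Q:H_0\to H_1$ be the isomorphism $Q:=(r_1|_{\ker L})\circ(r_0|_{\ker L})^{-1}$ (note that $r_j$ restricts to an isomorphism $\ker(L)\to H_j$). Assume in addition that $r_0\oplus r_1:E\to H_0\oplus H_1$ is onto. Let $B_j\subset H_j$ ($j=0,1$) be closed linear subspaces and let $k\in\mathbb{Z}$. Then the following are equivalent: (i) The pair $(B_0,Q^{-1}B_1)$ is a Fredholm pair of index $k$ in $H_0$; (ii) The pair $(QB_0,B_1)$ is a Fredholm pair of index $k$ in $H_1$; (iii) The operator $(\pi_{B_0^\perp}\circ r_0)\oplus(\pi_{B_1^\perp}\circ r_1)\oplus L:E\to B_0^\perp\oplus B_1^\perp\oplus F$ is Fredholm of index $k$; (iv) The restriction $L:\ker(\pi_{B_0^\perp}\circ r_0)\cap\ker(\pi_{B_1^\perp}\circ r_1)\to F$ is a Fredholm operator of index $k$.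
   Context: For a closed subspace $V$ of a Hilbert space $H$, $\pi_V:H\to V$ denotes the orthogonal projection onto $V$. A pair $(B,B')$ of closed linear subspaces of a Hilbert space $H$ is called a Fredholm pair if $B\cap B'$ is finite dimensional and $B+B'$ is closed and of finite codimension in $H$; its index is $\mathrm{ind}(B,B')=\dim(B\cap B')-\dim(H/(B+B'))$. *)

theory Defs
  imports "HOL-Analysis.Analysis"
begin

text \<open>Real Hilbert spaces are modelled as types of class real_inner + complete_space.\<close>

definition closed_subspace :: "'a::real_normed_vector set \<Rightarrow> bool" where
  "closed_subspace V \<longleftrightarrow> subspace V \<and> closed V"

definition fin_dim :: "'a::real_vector set \<Rightarrow> bool" where
  "fin_dim S \<longleftrightarrow> (\<exists>B. finite B \<and> span B = S)"

definition sum_set :: "'a::real_vector set \<Rightarrow> 'a set \<Rightarrow> 'a set" where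
  "sum_set R S = {x + y | x y. x \<in> R \<and> y \<in> S}"

definition finite_codim :: "'a::real_vector set \<Rightarrow> 'a set \<Rightarrow> bool" where
  "finite_codim C R \<longleftrightarrow> (\<exists>S. subspace S \<and> S \<subseteq> C \<and> fin_dim S \<and> sum_set R S = C)"

text \<open>codim C R = dim (C / R): the least dimension of a finite-dimensional complement.\<close>
definition codim :: "'a::real_vector set \<Rightarrow> 'a set \<Rightarrow> nat" where
  "codim C R = (LEAST n. \<exists>S. subspace S \<and> S \<subseteq> C \<and> fin_dim S \<and> dim S = n \<and> sum_set R S = C)"

definition orth_proj :: "'a::real_inner set \<Rightarrow> 'a \<Rightarrow> 'a" where
  "orth_proj V x = (THE y. y \<in> V \<and> (\<forall>v\<in>V. inner (x - y) v = 0))"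

definition fredholm_pair :: "'a::{real_inner,complete_space} set \<Rightarrow> 'a set \<Rightarrow> bool" where
  "fredholm_pair B B' \<longleftrightarrow> closed_subspace B \<and> closed_subspace B' \<and>
     fin_dim (B \<inter> B') \<and> closed (sum_set B B') \<and> finite_codim UNIV (sum_set B B')"

definition fredholm_pair_index :: "'a::{real_inner,complete_space} set \<Rightarrow> 'a set \<Rightarrow> int" where
  "fredholm_pair_index B B' = int (dim (B \<inter> B')) - int (codim UNIV (sum_set B B'))"

definition fredholm_op :: "'a::real_normed_vector set \<Rightarrow> 'b::real_normed_vector set \<Rightarrow> ('a \<Rightarrow> 'b) \<Rightarrow> bool" where
  "fredholm_op D C T \<longleftrightarrow> closed_subspace D \<and> closed_subspace C \<and> bounded_linear T \<and>
     T ` D \<subseteq> C \<and> fin_dim {x \<in> D. T x = 0} \<and> closed (T ` D) \<and> finite_codim C (T ` D)"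

definition fredholm_op_index :: "'a::real_normed_vector set \<Rightarrow> 'b::real_normed_vector set \<Rightarrow> ('a \<Rightarrow> 'b) \<Rightarrow> int" where
  "fredholm_op_index D C T = int (dim {x \<in> D. T x = 0}) - int (codim C (T ` D))"

end

theory Submission
  imports Defs "HOL-Analysis.Analysis"
begin


lemma parallelogram:
  fixes a b :: "'a::real_inner"
  shows "norm (a + b)^2 + norm (a - b)^2 = 2 * norm a ^2 + 2 * norm b ^2"
  by (simp add: power2_norm_eq_inner inner_add inner_diff inner_commute algebra_simps)

lemma proj_exists:
  fixes V :: "'a::{real_inner,complete_space} set"
  assumes sV: "subspace V" and cV: "closed V"
  shows "\<exists>v\<in>V. \<forall>w\<in>V. inner (x - v) w = 0"
proof -
  define d where "d = (INF v\<in>V. norm (x - v))"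
  have V0: "0 \<in> V" using sV by (simp add: subspace_0)
  have bdd: "bdd_below ((\<lambda>v. norm (x - v)) ` V)" by (rule bdd_belowI[of _ 0]) auto
  have dle: "d \<le> norm (x - v)" if "v \<in> V" for v
    unfolding d_def using bdd that by (rule cINF_lower)
  have d0: "0 \<le> d" unfolding d_def using V0 by (intro cINF_greatest) auto
  have approx: "\<exists>v\<in>V. norm (x - v) < d + e" if "e > 0" for e
  proof -
    have "d < d + e" using that by simp
    then show ?thesis unfolding d_def using V0
      by (subst (asm) cINF_less_iff[OF _ bdd]) auto
  qed
  have "\<forall>n. \<exists>v\<in>V. norm (x - v) < d + 1 / real (Suc n)"
    using approx by simp
  then obtain vs where vsV: "\<And>n. vs n \<in> V" and vsd: "\<And>n. norm (x - vs n) < d + 1 / real (Suc n)"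
    by metis
  have sq: "norm (x - vs n)^2 \<le> d^2 + (2*d+1) / real (Suc n)" for n
  proof -
    have a: "0 \<le> norm (x - vs n)" by simp
    have "norm (x - vs n)^2 \<le> (d + 1 / real (Suc n))^2"
      using vsd[of n] a by (intro power_mono) auto
    also have "\<dots> = d^2 + (2*d + 1/real (Suc n)) / real (Suc n)"
    proof -
      have "\<And>s::real. s > 0 \<Longrightarrow> (d + 1/s)^2 = d^2 + (2*d + 1/s)/s"
        by (simp add: power2_eq_square field_simps)
      then show ?thesis by simp
    qed
    also have "\<dots> \<le> d^2 + (2*d+1) / real (Suc n)"
      by (intro add_left_mono divide_right_mono) auto
    finally show ?thesis .
  qed
  have dist_bound: "norm (vs m - vs n)^2 \<le> 2 * ((2*d+1) / real (Suc m)) + 2 * ((2*d+1) / real (Suc n))" for m n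
  proof -
    have mid: "(1/2) *\<^sub>R (vs m + vs n) \<in> V"
      using sV vsV by (simp add: subspace_add subspace_scale)
    have "d \<le> norm (x - (1/2) *\<^sub>R (vs m + vs n))" by (rule dle[OF mid])
    hence "d^2 \<le> norm (x - (1/2) *\<^sub>R (vs m + vs n))^2" using d0 by (intro power_mono) auto
    also have "norm (x - (1/2) *\<^sub>R (vs m + vs n)) = norm ((x - vs m) + (x - vs n)) / 2"
    proof -
      have hx: "x = (1/2) *\<^sub>R x + (1/2) *\<^sub>R x" by (simp flip: scaleR_add_left)
      have "x - (1/2) *\<^sub>R (vs m + vs n) = (1/2) *\<^sub>R ((x - vs m) + (x - vs n))"
        by (subst hx) (simp add: algebra_simps)
      then show ?thesis by simp
    qed
    finally have h: "4 * d^2 \<le> norm ((x - vs m) + (x - vs n))^2"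
      by (simp add: power_divide)
    have p: "norm ((x - vs m) + (x - vs n))^2 + norm ((x - vs m) - (x - vs n))^2
       = 2 * norm (x - vs m)^2 + 2 * norm (x - vs n)^2" by (rule parallelogram)
    have "(x - vs m) - (x - vs n) = vs n - vs m" by simp
    hence "norm ((x - vs m) - (x - vs n)) = norm (vs m - vs n)" by (simp add: norm_minus_commute)
    with h sq[of m] sq[of n] show ?thesis using p[unfolded \<open>norm ((x - vs m) - (x - vs n)) = norm (vs m - vs n)\<close>] by linarith
  qed
  have cauchy: "Cauchy vs"
  proof (rule metric_CauchyI)
    fix e :: real assume e: "e > 0"
    obtain N :: nat where N: "4 * (2*d+1) / e^2 < real N"
      using reals_Archimedean2 by blast
    show "\<exists>M. \<forall>m\<ge>M. \<forall>n\<ge>M. dist (vs m) (vs n) < e"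
    proof (intro exI allI impI)
      fix m n assume m: "m \<ge> N" and n: "n \<ge> N"
      have pos: "0 < 2*d+1" using d0 by simp
      have "(2*d+1) / real (Suc m) \<le> (2*d+1) / real (Suc N)"
        using m pos by (intro divide_left_mono) auto
      moreover have "(2*d+1) / real (Suc n) \<le> (2*d+1) / real (Suc N)"
        using n pos by (intro divide_left_mono) auto
      ultimately have "norm (vs m - vs n)^2 \<le> 4 * ((2*d+1) / real (Suc N))"
        using dist_bound[of m n] by linarith
      also have "\<dots> = 4 * (2*d+1) / real (Suc N)" by simp
      also have "\<dots> < e^2"
      proof -
        have "4 * (2*d+1) < e^2 * real N" using N e by (simp add: field_simps)
        also have "\<dots> \<le> e^2 * real (Suc N)" using e by simp
        finally show ?thesis by (simp add: field_simps)
      qed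
      finally have "norm (vs m - vs n) < e" using e
        by (meson abs_le_square_iff less_le_not_le not_less power2_less_imp_less abs_ge_zero order.strict_trans1 abs_of_pos less_imp_le) 
      thus "dist (vs m) (vs n) < e" by (simp add: dist_norm)
    qed
  qed
  then obtain v where lim: "vs \<longlonglongrightarrow> v" using complete_UNIV convergent_eq_Cauchy by blast
  have vV: "v \<in> V" using cV vsV lim closed_sequentially by blast
  have "(\<lambda>n. norm (x - vs n)) \<longlonglongrightarrow> norm (x - v)"
    by (intro tendsto_intros lim)
  moreover have "(\<lambda>n. norm (x - vs n)) \<longlonglongrightarrow> d"
  proof (rule tendsto_sandwich[of "\<lambda>n. d" _ _ "\<lambda>n. d + 1 / real (Suc n)"])
    show "\<forall>\<^sub>F n in sequentially. d \<le> norm (x - vs n)" by (rule always_eventually) (use dle vsV in blast)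
    show "\<forall>\<^sub>F n in sequentially. norm (x - vs n) \<le> d + 1 / real (Suc n)"
      by (rule always_eventually) (use vsd less_imp_le in blast)
    show "(\<lambda>n. d) \<longlonglongrightarrow> d" by simp
    show "(\<lambda>n. d + 1 / real (Suc n)) \<longlonglongrightarrow> d"
      using tendsto_add[OF tendsto_const[of d] LIMSEQ_inverse_real_of_nat] by (simp add: divide_inverse)
  qed
  ultimately have nd: "norm (x - v) = d" using LIMSEQ_unique by blast
  show ?thesis
  proof (intro bexI[OF _ vV] ballI)
    fix w assume wV: "w \<in> V"
    show "inner (x - v) w = 0"
    proof (rule ccontr)
      assume c: "inner (x - v) w \<noteq> 0"
      then have w0: "w \<noteq> 0" by auto
      define t where "t = inner (x - v) w / (inner w w)"
      have ww: "inner w w > 0" using w0 by simp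
      have "v + t *\<^sub>R w \<in> V" using sV vV wV by (simp add: subspace_add subspace_scale)
      hence "d \<le> norm (x - (v + t *\<^sub>R w))" by (rule dle)
      also have "x - (v + t *\<^sub>R w) = (x - v) - t *\<^sub>R w" by simp
      finally have "d \<le> norm ((x - v) - t *\<^sub>R w)" .
      hence "norm (x - v)^2 \<le> norm ((x - v) - t *\<^sub>R w)^2" using nd d0
        by (simp add: power_mono)
      also have "norm ((x - v) - t *\<^sub>R w)^2 = inner ((x - v) - t *\<^sub>R w) ((x - v) - t *\<^sub>R w)"
        by (simp add: power2_norm_eq_inner)
      also have "\<dots> = inner (x - v) (x - v) - 2 * t * inner (x - v) w + t^2 * inner w w"
        by (simp add: inner_diff_left inner_diff_right inner_commute power2_eq_square algebra_simps)
      also have "inner (x - v) (x - v) = norm (x - v)^2" by (simp add: power2_norm_eq_inner)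
      also have "2 * t * inner (x - v) w = 2 * (inner (x - v) w)^2 / inner w w"
        by (simp add: t_def power2_eq_square)
      also have "t^2 * inner w w = (inner (x - v) w)^2 / inner w w"
        using ww by (simp add: t_def power2_eq_square)
      finally have "(inner (x - v) w)^2 / inner w w \<le> 0" by simp
      moreover have "(inner (x - v) w)^2 / inner w w > 0" using c ww by simp
      ultimately show False by simp
    qed
  qed
qed

lemma closed_subspace_D: "closed_subspace V \<longleftrightarrow> subspace V \<and> closed V"
  by (simp add: closed_subspace_def)

lemma proj_unique:
  fixes V :: "'a::real_inner set"
  assumes sV: "subspace V" and "y \<in> V" "\<forall>v\<in>V. inner (x - y) v = 0"
    and "y' \<in> V" "\<forall>v\<in>V. inner (x - y') v = 0"
  shows "y = y'"
proof -
  have d: "y' - y \<in> V" using assms by (simp add: subspace_diff)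
  have "inner (y' - y) (y' - y) = inner (x - y) (y' - y) - inner (x - y') (y' - y)"
    by (simp add: inner_diff_left)
  also have "\<dots> = 0" using assms d by simp
  finally show ?thesis by simp
qed

lemma orth_proj_props:
  fixes V :: "'a::{real_inner,complete_space} set"
  assumes "closed_subspace V"
  shows "orth_proj V x \<in> V \<and> (\<forall>v\<in>V. inner (x - orth_proj V x) v = 0)"
proof -
  have sV: "subspace V" and cV: "closed V" using assms by (auto simp: closed_subspace_def)
  have "\<exists>!y. y \<in> V \<and> (\<forall>v\<in>V. inner (x - y) v = 0)"
    using proj_exists[OF sV cV, of x] proj_unique[OF sV] by blast
  then show ?thesis unfolding orth_proj_def by (rule theI')
qed

lemma orth_proj_eq:
  fixes V :: "'a::{real_inner,complete_space} set"
  assumes "closed_subspace V" "y \<in> V" "\<forall>v\<in>V. inner (x - y) v = 0"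
  shows "orth_proj V x = y"
  using proj_unique[of V "orth_proj V x" x y] orth_proj_props[OF assms(1), of x] assms
  by (auto simp: closed_subspace_def)

lemma orth_proj_id:
  fixes V :: "'a::{real_inner,complete_space} set"
  assumes "closed_subspace V" "y \<in> V"
  shows "orth_proj V y = y"
  using orth_proj_eq[OF assms] by simp

lemma orth_proj_bounded_linear:
  fixes V :: "'a::{real_inner,complete_space} set"
  assumes cs: "closed_subspace V"
  shows "bounded_linear (orth_proj V)"
proof -
  have sV: "subspace V" using cs by (simp add: closed_subspace_def)
  note P = orth_proj_props[OF cs]
  have add: "orth_proj V (x + y) = orth_proj V x + orth_proj V y" for x y
    using P[of x] P[of y] sV
    by (intro orth_proj_eq[OF cs]) (auto simp: subspace_add inner_diff_left inner_add_left algebra_simps)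
  have sc: "orth_proj V (r *\<^sub>R x) = r *\<^sub>R orth_proj V x" for r x
  proof (intro orth_proj_eq[OF cs])
    show "r *\<^sub>R orth_proj V x \<in> V" using P[of x] sV by (simp add: subspace_scale)
    show "\<forall>v\<in>V. inner (r *\<^sub>R x - r *\<^sub>R orth_proj V x) v = 0"
      using P[of x] by (simp flip: scaleR_diff_right)
  qed
  have nb: "norm (orth_proj V x) \<le> norm x * 1" for x
  proof -
    have o: "inner (x - orth_proj V x) (orth_proj V x) = 0" using P[of x] by blast
    have pyth: "\<And>a b::'a. inner a b = 0 \<Longrightarrow> norm (a + b)^2 = norm a^2 + norm b^2"
      by (simp add: power2_norm_eq_inner inner_add_left inner_add_right inner_commute)
    have "norm ((x - orth_proj V x) + orth_proj V x)^2 = norm (x - orth_proj V x)^2 + norm (orth_proj V x)^2"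
      using o by (rule pyth)
    then have "norm x ^ 2 = norm (x - orth_proj V x)^2 + norm (orth_proj V x)^2" by simp
    then have "norm (orth_proj V x)^2 \<le> norm x ^ 2" by simp
    then show ?thesis by (simp add: power2_le_iff_abs_le)
  qed
  show ?thesis by (rule bounded_linear_intro[OF add sc nb])
qed

lemma closed_orthogonal_comp:
  fixes B :: "'a::real_inner set"
  shows "closed (orthogonal_comp B)"
proof -
  have "orthogonal_comp B = (\<Inter>y\<in>B. {x. inner y x = 0})"
    by (auto simp: orthogonal_comp_def orthogonal_def)
  moreover have "closed {x. inner y x = 0}" for y :: 'a
    by (intro closed_Collect_eq continuous_intros)
  ultimately show ?thesis by (auto intro: closed_INT)
qed

lemma closed_subspace_orthogonal_comp:
  fixes B :: "'a::real_inner set"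
  shows "closed_subspace (orthogonal_comp B)"
  by (simp add: closed_subspace_def closed_orthogonal_comp subspace_orthogonal_comp)

lemma orth_proj_perp_zero:
  fixes B :: "'a::{real_inner,complete_space} set"
  assumes cs: "closed_subspace B"
  shows "orth_proj (orthogonal_comp B) z = 0 \<longleftrightarrow> z \<in> B"
proof
  assume "z \<in> B"
  then show "orth_proj (orthogonal_comp B) z = 0"
    by (intro orth_proj_eq[OF closed_subspace_orthogonal_comp])
       (auto simp: orthogonal_comp_def orthogonal_def subspace_0 subspace_orthogonal_comp)
next
  assume z: "orth_proj (orthogonal_comp B) z = 0"
  have h: "inner z v = 0" if "v \<in> orthogonal_comp B" for v
    using orth_proj_props[OF closed_subspace_orthogonal_comp, of B z] z that by simp
  define p where "p = orth_proj B z"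
  have pB: "p \<in> B" and o: "\<forall>w\<in>B. inner (z - p) w = 0"
    using orth_proj_props[OF cs, of z] by (auto simp: p_def)
  have zp: "z - p \<in> orthogonal_comp B"
    using o by (auto simp: orthogonal_comp_def orthogonal_def inner_commute)
  have "inner (z - p) (z - p) = inner z (z - p) - inner p (z - p)" by (simp add: inner_diff_left)
  also have "\<dots> = 0" using h[OF zp] o pB by (simp add: inner_commute)
  finally have "z = p" by simp
  with pB show "z \<in> B" by simp
qed




lemma summable_norm_cancel':
  fixes f :: "nat \<Rightarrow> 'a::{real_normed_vector,complete_space}"
  assumes "summable (\<lambda>n. norm (f n))" shows "summable f"
proof -
  have C: "\<forall>e>0. \<exists>N. \<forall>m\<ge>N. \<forall>n. norm (\<Sum>k=m..<n. norm (f k)) < e"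
    using assms summable_Cauchy by blast
  have key: "dist (\<Sum>k<m. f k) (\<Sum>k<n. f k) \<le> norm (\<Sum>k=m..<n. norm (f k))" if "m \<le> n" for m n
  proof -
    have "(\<Sum>k<n. f k) = (\<Sum>k<m. f k) + (\<Sum>k=m..<n. f k)"
      using that by (metis atLeast0LessThan sum.atLeastLessThan_concat zero_le)
    then have "dist (\<Sum>k<m. f k) (\<Sum>k<n. f k) = norm (\<Sum>k=m..<n. f k)"
      by (simp add: dist_norm norm_minus_commute)
    also have "\<dots> \<le> (\<Sum>k=m..<n. norm (f k))" by (rule norm_sum)
    also have "\<dots> \<le> norm (\<Sum>k=m..<n. norm (f k))" by simp
    finally show ?thesis .
  qed
  have "Cauchy (\<lambda>n. \<Sum>k<n. f k)"
  proof (rule metric_CauchyI)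
    fix e :: real assume "e > 0"
    then obtain N where N: "\<forall>m\<ge>N. \<forall>n. norm (\<Sum>k=m..<n. norm (f k)) < e" using C by blast
    show "\<exists>M. \<forall>m\<ge>M. \<forall>n\<ge>M. dist (\<Sum>k<m. f k) (\<Sum>k<n. f k) < e"
    proof (intro exI allI impI)
      fix m n assume "m \<ge> N" "n \<ge> N"
      show "dist (\<Sum>k<m. f k) (\<Sum>k<n. f k) < e"
      proof (cases "m \<le> n")
        case True then show ?thesis using key[OF True] N \<open>m \<ge> N\<close> by (meson order.strict_trans1)
      next
        case False then have "n \<le> m" by simp
        then show ?thesis using key[OF \<open>n \<le> m\<close>] N \<open>n \<ge> N\<close> by (metis dist_commute order.strict_trans1)
      qed
    qed
  qed
  then show ?thesis by (simp add: summable_iff_convergent Cauchy_convergent)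
qed

lemma baire_step:
  fixes T :: "'a::{real_normed_vector,complete_space} \<Rightarrow> 'b::{real_normed_vector,complete_space}"
  assumes "surj T"
  shows "\<exists>n::nat. interior (closure (T ` ball 0 (real (Suc n)))) \<noteq> {}"
proof (rule ccontr)
  assume "\<not> ?thesis"
  then have e: "\<And>n. interior (closure (T ` ball 0 (real (Suc n)))) = {}" by blast
  let ?G = "range (\<lambda>n. closure (T ` ball 0 (real (Suc n))))"
  have "euclidean interior_of \<Union>?G = {}"
    by (rule Baire_category_alt) (auto simp: completely_metrizable_space_euclidean euclidean_interior_of e[simplified])
  moreover have "\<Union>?G = UNIV"
  proof -
    have "y \<in> \<Union>?G" for y
    proof -
      obtain x where x: "T x = y" using assms by (metis surjD)
      obtain n :: nat where "norm x < real (Suc n)"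
        by (metis reals_Archimedean2 less_trans lessI of_nat_less_iff)
      then have "y \<in> closure (T ` ball 0 (real (Suc n)))"
        using x closure_subset by fastforce
      then show ?thesis by blast
    qed
    then show ?thesis by blast
  qed
  ultimately show False by (simp add: euclidean_interior_of)
qed

lemma open_mapping_bound:
  fixes T :: "'a::{real_normed_vector,complete_space} \<Rightarrow> 'b::{real_normed_vector,complete_space}"
  assumes bl: "bounded_linear T" and su: "surj T"
  shows "\<exists>M>0. \<forall>y. \<exists>x. T x = y \<and> norm x \<le> M * norm y"
proof -
  interpret T: bounded_linear T by (rule bl)
  obtain n :: nat where "interior (closure (T ` ball 0 (real (Suc n)))) \<noteq> {}"
    using baire_step[OF su] by blast
  then obtain y0 where "y0 \<in> interior (closure (T ` ball 0 (real (Suc n))))" by blast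
  then obtain \<epsilon> where \<epsilon>: "\<epsilon> > 0" and bsub: "ball y0 \<epsilon> \<subseteq> closure (T ` ball 0 (real (Suc n)))"
    using mem_interior by blast
  define R where "R = real (Suc n)"
  have R: "R > 0" by (simp add: R_def)
  have step1: "\<exists>x. norm x < 2 * R \<and> norm (y - T x) < \<eta>" if y: "norm y < \<epsilon>" and \<eta>: "\<eta> > 0" for y \<eta>
  proof -
    have "y0 + y \<in> closure (T ` ball 0 R)" using bsub y by (auto simp: R_def dist_norm)
    then obtain z1 where "z1 \<in> T ` ball 0 R" "dist z1 (y0 + y) < \<eta>/2"
      using \<eta> unfolding closure_approachable by (meson half_gt_zero)
    then obtain x1 where x1: "norm x1 < R" "dist (T x1) (y0 + y) < \<eta>/2" by auto
    have "y0 \<in> closure (T ` ball 0 R)" using bsub \<epsilon> by (auto simp: R_def)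
    then obtain z2 where "z2 \<in> T ` ball 0 R" "dist z2 y0 < \<eta>/2"
      using \<eta> unfolding closure_approachable by (meson half_gt_zero)
    then obtain x2 where x2: "norm x2 < R" "dist (T x2) y0 < \<eta>/2" by auto
    have "norm (x1 - x2) \<le> norm x1 + norm x2" by (rule norm_triangle_ineq4)
    then have "norm (x1 - x2) < 2 * R" using x1 x2 by simp
    moreover have "norm (y - T (x1 - x2)) < \<eta>"
    proof -
      have "y - T (x1 - x2) = (y0 + y - T x1) - (y0 - T x2)" by (simp add: T.diff algebra_simps)
      then have "norm (y - T (x1 - x2)) \<le> norm (y0 + y - T x1) + norm (y0 - T x2)"
        by (metis norm_triangle_ineq4)
      also have "\<dots> < \<eta>/2 + \<eta>/2" using x1 x2 by (intro add_strict_mono) (auto simp: dist_norm norm_minus_commute)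
      finally show ?thesis by simp
    qed
    ultimately show ?thesis by blast
  qed
  define K where "K = 4 * R / \<epsilon>"
  have K: "K > 0" using R \<epsilon> by (simp add: K_def)
  have step2: "\<exists>x. norm x \<le> K * norm y \<and> norm (y - T x) \<le> \<eta>" if \<eta>: "\<eta> > 0" for y \<eta>
  proof (cases "y = 0")
    case True then show ?thesis using \<eta> by (intro exI[of _ 0]) auto
  next
    case False
    then have ny: "norm y > 0" by simp
    define c where "c = \<epsilon> / (2 * norm y)"
    have c: "c > 0" using ny \<epsilon> by (simp add: c_def)
    have "norm (c *\<^sub>R y) < \<epsilon>" using ny \<epsilon> by (simp add: c_def)
    moreover have "c * \<eta> > 0" using c \<eta> by simp
    ultimately obtain x' where x': "norm x' < 2 * R" "norm (c *\<^sub>R y - T x') < c * \<eta>"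
      using step1 by blast
    show ?thesis
    proof (intro exI conjI)
      have "norm ((1/c) *\<^sub>R x') = norm x' / c" using c by simp
      also have "\<dots> \<le> 2 * R / c" using x' c by (simp add: divide_right_mono)
      also have "\<dots> = K * norm y" using ny \<epsilon> unfolding c_def K_def by (simp add: divide_simps)
      finally show "norm ((1/c) *\<^sub>R x') \<le> K * norm y" .
      have "y - T ((1/c) *\<^sub>R x') = (1/c) *\<^sub>R (c *\<^sub>R y - T x')" using c
        by (simp add: T.scaleR scaleR_diff_right)
      then have "norm (y - T ((1/c) *\<^sub>R x')) = norm (c *\<^sub>R y - T x') / c" using c by simp
      also have "\<dots> \<le> \<eta>" using x' c by (simp add: divide_le_eq mult.commute less_imp_le)
      finally show "norm (y - T ((1/c) *\<^sub>R x')) \<le> \<eta>" .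
    qed
  qed
  have "\<forall>y. \<exists>x. norm x \<le> K * norm y \<and> norm (y - T x) \<le> norm y / 2"
  proof
    fix y show "\<exists>x. norm x \<le> K * norm y \<and> norm (y - T x) \<le> norm y / 2"
    proof (cases "y = 0")
      case True then show ?thesis by (intro exI[of _ 0]) auto
    next
      case False then show ?thesis using step2[of "norm y / 2" y] by simp
    qed
  qed
  then obtain c where cK: "\<And>y. norm (c y) \<le> K * norm y" and ch: "\<And>y. norm (y - T (c y)) \<le> norm y / 2"
    by metis
  show ?thesis
  proof (intro exI[of _ "2 * K"] conjI allI)
    show "2 * K > 0" using K by simp
    fix y
    define ys where "ys k = ((\<lambda>z. z - T (c z)) ^^ k) y" for k
    have ys_Suc: "ys (Suc k) = ys k - T (c (ys k))" for k by (simp add: ys_def)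
    have ys_bound: "norm (ys k) \<le> norm y / 2^k" for k
    proof (induction k)
      case 0 then show ?case by (simp add: ys_def)
    next
      case (Suc k)
      have "norm (ys (Suc k)) \<le> norm (ys k) / 2" using ch ys_Suc by simp
      also have "\<dots> \<le> norm y / 2^k / 2" using Suc by (simp add: divide_right_mono)
      finally show ?case by simp
    qed
    define xs where "xs k = c (ys k)" for k
    have xs_bound: "norm (xs k) \<le> K * norm y * (1/2)^k" for k
    proof -
      have "norm (xs k) \<le> K * norm (ys k)" by (simp add: xs_def cK)
      also have "\<dots> \<le> K * (norm y / 2^k)" using K ys_bound by (intro mult_left_mono) auto
      finally show ?thesis by (simp add: power_one_over)
    qed
    have sg: "summable (\<lambda>k. K * norm y * (1/2::real)^k)"
      by (intro summable_mult summable_geometric) auto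
    have sn: "summable (\<lambda>k. norm (xs k))"
      by (rule summable_comparison_test[OF _ sg]) (use xs_bound in auto)
    have sx: "summable xs" using sn by (rule summable_norm_cancel')
    have "norm (suminf xs) \<le> (\<Sum>k. norm (xs k))"
    proof (rule LIMSEQ_le)
      show "(\<lambda>m. norm (\<Sum>k<m. xs k)) \<longlonglongrightarrow> norm (suminf xs)"
        using summable_sums[OF sx] unfolding sums_def by (rule tendsto_norm)
      show "(\<lambda>m. \<Sum>k<m. norm (xs k)) \<longlonglongrightarrow> (\<Sum>k. norm (xs k))"
        using summable_sums[OF sn] unfolding sums_def .
      show "\<exists>N. \<forall>n\<ge>N. norm (\<Sum>k<n. xs k) \<le> (\<Sum>k<n. norm (xs k))"
        by (simp add: norm_sum)
    qed
    also have "\<dots> \<le> (\<Sum>k. K * norm y * (1/2::real)^k)"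
      by (rule suminf_le[OF xs_bound sn sg])
    also have "\<dots> = 2 * K * norm y"
      using suminf_geometric[of "1/2::real"] by (simp add: suminf_mult)
    finally have nb: "norm (suminf xs) \<le> 2 * K * norm y" .
    have psum: "(\<Sum>k<m. T (xs k)) = y - ys m" for m
    proof (induction m)
      case 0 then show ?case by (simp add: ys_def)
    next
      case (Suc m) then show ?case by (simp add: ys_Suc xs_def)
    qed
    have ys0: "ys \<longlonglongrightarrow> 0"
    proof (rule tendsto_norm_zero_cancel)
      show "(\<lambda>k. norm (ys k)) \<longlonglongrightarrow> 0"
      proof (rule tendsto_sandwich[of "\<lambda>k. 0" _ _ "\<lambda>k. norm y * (1/2)^k"])
        show "\<forall>\<^sub>F k in sequentially. 0 \<le> norm (ys k)" by simp
        show "\<forall>\<^sub>F k in sequentially. norm (ys k) \<le> norm y * (1/2)^k"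
        proof (rule always_eventually, rule allI)
          fix k
          have "norm y * (1/2::real)^k = norm y / 2^k" by (simp add: power_one_over)
          then show "norm (ys k) \<le> norm y * (1/2)^k" using ys_bound[of k] by simp
        qed
        show "(\<lambda>k. 0) \<longlonglongrightarrow> (0::real)" by simp
        show "(\<lambda>k. norm y * (1/2::real)^k) \<longlonglongrightarrow> 0"
          by (intro tendsto_mult_right_zero LIMSEQ_power_zero) auto
      qed
    qed
    have "(\<lambda>k. T (xs k)) sums y"
      unfolding sums_def psum using tendsto_diff[OF tendsto_const[of y] ys0] by simp
    moreover have "(\<lambda>k. T (xs k)) sums T (suminf xs)"
      using T.suminf[OF sx] summable_sums T.summable[OF sx] by metis
    ultimately have "T (suminf xs) = y" using sums_unique2 by blast
    with nb show "\<exists>x. T x = y \<and> norm x \<le> 2 * K * norm y" by blast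
  qed
qed

lemma open_mapping:
  fixes T :: "'a::{real_normed_vector,complete_space} \<Rightarrow> 'b::{real_normed_vector,complete_space}"
  assumes bl: "bounded_linear T" and su: "surj T" and U: "open U"
  shows "open (T ` U)"
proof -
  interpret T: bounded_linear T by (rule bl)
  obtain M where M: "M > 0" and Mb: "\<And>y. \<exists>x. T x = y \<and> norm x \<le> M * norm y"
    using open_mapping_bound[OF bl su] by blast
  show ?thesis
  proof (rule openI)
    fix y assume "y \<in> T ` U"
    then obtain x where x: "x \<in> U" "y = T x" by blast
    obtain r where r: "r > 0" "ball x r \<subseteq> U" using U x open_contains_ball by blast
    show "\<exists>e>0. ball y e \<subseteq> T ` U"
    proof (intro exI[of _ "r / M"] conjI subsetI)
      show "r / M > 0" using r M by simp
      fix z assume "z \<in> ball y (r / M)"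
      then have zd: "norm (z - y) < r / M" by (simp add: dist_norm norm_minus_commute)
      obtain w where w: "T w = z - y" "norm w \<le> M * norm (z - y)" using Mb by blast
      have "M * norm (z - y) < M * (r / M)" using zd M by (rule mult_strict_left_mono)
      then have "norm w < r" using w M by simp
      then have "x + w \<in> U" using r by (auto simp: dist_norm)
      moreover have "T (x + w) = z" using w x by (simp add: T.add)
      ultimately show "z \<in> T ` U" by (metis image_eqI)
    qed
  qed
qed

lemma open_mapping_closed_saturated:
  fixes T :: "'a::{real_normed_vector,complete_space} \<Rightarrow> 'b::{real_normed_vector,complete_space}"
  assumes bl: "bounded_linear T" and su: "surj T" and Z: "closed Z"
    and sat: "\<And>x x'. T x = T x' \<Longrightarrow> x \<in> Z \<Longrightarrow> x' \<in> Z"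
  shows "closed (T ` Z)"
proof -
  have "- (T ` Z) = T ` (- Z)"
  proof
    show "- T ` Z \<subseteq> T ` (- Z)"
    proof
      fix y assume y: "y \<in> - T ` Z"
      obtain x where "y = T x" using su by (metis surjD)
      with y show "y \<in> T ` (- Z)" by auto
    qed
    show "T ` (- Z) \<subseteq> - T ` Z" using sat by blast
  qed
  moreover have "open (T ` (- Z))" using open_mapping[OF bl su] Z by (simp add: open_Compl)
  ultimately show ?thesis by (simp add: closed_def)
qed

lemma bounded_inverse:
  fixes T :: "'a::{real_normed_vector,complete_space} \<Rightarrow> 'b::{real_normed_vector,complete_space}"
  assumes bl: "bounded_linear T" and bi: "bij T"
  shows "bounded_linear (inv T)"
proof -
  interpret T: bounded_linear T by (rule bl)
  have su: "surj T" and inj: "inj T" using bi by (auto simp: bij_def)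
  obtain M where M: "M > 0" and Mb: "\<And>y. \<exists>x. T x = y \<and> norm x \<le> M * norm y"
    using open_mapping_bound[OF bl su] by blast
  have TI: "T (inv T y) = y" for y using su by (simp add: surj_f_inv_f)
  have IT: "inv T (T x) = x" for x using inj by simp
  show ?thesis
  proof (rule bounded_linear_intro)
    show "inv T (x + y) = inv T x + inv T y" for x y
      by (metis IT T.add TI)
    show "inv T (r *\<^sub>R x) = r *\<^sub>R inv T x" for r x
      by (metis IT T.scaleR TI)
    show "norm (inv T x) \<le> norm x * M" for x
    proof -
      obtain z where z: "T z = x" "norm z \<le> M * norm x" using Mb by blast
      then have "inv T x = z" using IT by blast
      with z show ?thesis by (simp add: mult.commute)
    qed
  qed
qed




lemma mem_sum_set: "z \<in> sum_set R S \<longleftrightarrow> (\<exists>x\<in>R. \<exists>y\<in>S. z = x + y)"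
  by (auto simp: sum_set_def)

lemma subspace_sum_set:
  assumes R: "subspace R" and S: "subspace S" shows "subspace (sum_set R S)"
  unfolding sum_set_def by (rule real_vector.subspace_sums[OF R S])

lemma fin_dim_subspace: "fin_dim S \<Longrightarrow> subspace S"
  by (auto simp: fin_dim_def)

lemma fin_dim_basis:
  assumes "fin_dim S"
  obtains B where "finite B" "independent B" "span B = S" "card B = dim S"
proof -
  obtain A where A: "finite A" "span A = S" using assms by (auto simp: fin_dim_def)
  have sS: "subspace S" using A by auto
  obtain B where B: "B \<subseteq> S" "independent B" "S \<subseteq> span B" "card B = dim S"
    by (rule real_vector.basis_exists[of S]) blast
  have "finite B" using real_vector.independent_span_bound[OF A(1) B(2)] B(1) A(2) by blast
  moreover have "span B = S" using B(1,3) sS by (metis real_vector.span_minimal subset_antisym)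
  ultimately show ?thesis using B that by blast
qed

lemma inj_image_dim:
  assumes lf: "linear f" and sS: "subspace S" and inj: "inj_on f S"
  shows "(fin_dim (f ` S) \<longleftrightarrow> fin_dim S) \<and> dim (f ` S) = dim S"
proof -
  obtain B where B: "B \<subseteq> S" "independent B" "S \<subseteq> span B"
    by (rule real_vector.maximal_independent_subset[of S]) blast
  have spB: "span B = S" using B sS by (metis real_vector.span_minimal subset_antisym)
  have injB: "inj_on f (span B)" using inj spB by simp
  have indf: "independent (f ` B)"
    by (rule real_vector.linear_independent_injective_image[OF lf B(2) injB])
  have spf: "span (f ` B) = f ` S" using real_vector.linear_span_image[OF lf] spB by simp
  have cardeq: "card (f ` B) = card B"
    using injB by (meson card_image inj_on_subset real_vector.span_superset)
  have fin_eq: "finite (f ` B) \<longleftrightarrow> finite B"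
    using injB by (meson finite_image_iff inj_on_subset real_vector.span_superset)
  have fd1: "fin_dim S \<longleftrightarrow> finite B"
  proof
    assume "fin_dim S"
    then obtain A where "finite A" "span A = S" by (auto simp: fin_dim_def)
    then show "finite B" using real_vector.independent_span_bound[OF _ B(2)] B(1) by blast
  next
    assume "finite B" then show "fin_dim S" using spB by (auto simp: fin_dim_def)
  qed
  have fd2: "fin_dim (f ` S) \<longleftrightarrow> finite (f ` B)"
  proof
    assume "fin_dim (f ` S)"
    then obtain A where "finite A" "span A = f ` S" by (auto simp: fin_dim_def)
    then show "finite (f ` B)" using real_vector.independent_span_bound[OF _ indf] B(1) by blast
  next
    assume "finite (f ` B)" then show "fin_dim (f ` S)" using spf by (auto simp: fin_dim_def)
  qed
  have "span S = S" using sS by (simp add: real_vector.span_eq_iff)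
  then have "span B = span S" using spB by (simp only:)
  then have "dim S = card B" using real_vector.dim_eq_card B(2) by blast
  moreover have "dim (f ` S) = card (f ` B)"
    using real_vector.dim_eq_card[of "f ` B" "f ` S"] spf indf
    by (metis real_vector.span_span)
  ultimately show ?thesis using fd1 fd2 fin_eq cardeq by simp
qed

lemma dim_image_le_fd:
  assumes lf: "linear f" and fd: "fin_dim S"
  shows "fin_dim (f ` S) \<and> dim (f ` S) \<le> dim S"
proof -
  obtain B where B: "finite B" "independent B" "span B = S" "card B = dim S"
    by (rule fin_dim_basis[OF fd])
  have spf: "span (f ` B) = f ` S" using real_vector.linear_span_image[OF lf] B by simp
  have "dim (f ` S) \<le> card (f ` B)"
    using real_vector.dim_le_card[of "f ` S" "f ` B"] spf B(1) by simp
  also have "\<dots> \<le> card B" using B(1) by (rule card_image_le)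
  finally show ?thesis using spf B by (auto simp: fin_dim_def)
qed

definition compl_dims :: "'a::real_vector set \<Rightarrow> 'a set \<Rightarrow> nat set" where
  "compl_dims C R = {n. \<exists>S. subspace S \<and> S \<subseteq> C \<and> fin_dim S \<and> dim S = n \<and> sum_set R S = C}"

lemma codim_eq_least: "codim C R = (LEAST n. n \<in> compl_dims C R)"
  by (simp add: codim_def compl_dims_def)

lemma finite_codim_eq: "finite_codim C R \<longleftrightarrow> compl_dims C R \<noteq> {}"
  by (auto simp: finite_codim_def compl_dims_def)

lemma least_transfer:
  fixes N1 N2 :: "nat set"
  assumes "\<And>n. n \<in> N1 \<Longrightarrow> \<exists>m\<in>N2. m \<le> n" "\<And>n. n \<in> N2 \<Longrightarrow> \<exists>m\<in>N1. m \<le> n"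
  shows "(N1 \<noteq> {} \<longleftrightarrow> N2 \<noteq> {}) \<and> (LEAST n. n \<in> N1) = (LEAST n. n \<in> N2)"
proof (cases "N1 = {}")
  case True
  then have "N2 = {}" using assms(2) by blast
  with True show ?thesis by simp
next
  case False
  then obtain a where a: "a \<in> N1" by blast
  then obtain b where b: "b \<in> N2" using assms(1) by blast
  have l1: "(LEAST n. n \<in> N1) \<in> N1" using a by (rule LeastI)
  have l2: "(LEAST n. n \<in> N2) \<in> N2" using b by (rule LeastI)
  obtain m where m: "m \<in> N2" "m \<le> (LEAST n. n \<in> N1)" using assms(1)[OF l1] by blast
  obtain m' where m': "m' \<in> N1" "m' \<le> (LEAST n. n \<in> N2)" using assms(2)[OF l2] by blast
  have "(LEAST n. n \<in> N2) \<le> m" using m(1) by (rule Least_le)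
  moreover have "(LEAST n. n \<in> N1) \<le> m'" using m'(1) by (rule Least_le)
  ultimately show ?thesis using m m' a b by auto
qed

lemma codim_transfer:
  assumes lf: "linear \<psi>" and sC: "subspace C" and sC2: "subspace C2" and sR2: "subspace R2"
    and R2C2: "R2 \<subseteq> C2" and img: "\<psi> ` C \<subseteq> C2" and cov: "C2 \<subseteq> sum_set (\<psi> ` C) R2"
    and Rdef: "R = {x\<in>C. \<psi> x \<in> R2}"
  shows "(finite_codim C R \<longleftrightarrow> finite_codim C2 R2) \<and> codim C R = codim C2 R2"
proof -
  have RC: "R \<subseteq> C" using Rdef by auto
  have a: "\<exists>m\<in>compl_dims C R. m \<le> n" if n: "n \<in> compl_dims C2 R2" for n
  proof -
    obtain S2 where S2: "subspace S2" "S2 \<subseteq> C2" "fin_dim S2" "dim S2 = n" "sum_set R2 S2 = C2"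
      using n by (auto simp: compl_dims_def)
    obtain B2 where B2: "finite B2" "independent B2" "span B2 = S2" "card B2 = dim S2"
      by (rule fin_dim_basis[OF S2(3)])
    have "\<forall>b\<in>B2. \<exists>c. c \<in> C \<and> \<psi> c - b \<in> R2"
    proof
      fix b assume "b \<in> B2"
      then have "b \<in> C2" using B2(3) S2(2) real_vector.span_base by blast
      then have "b \<in> sum_set (\<psi> ` C) R2" using cov by blast
      then obtain c r where "c \<in> C" "r \<in> R2" "b = \<psi> c + r" by (auto simp: mem_sum_set)
      moreover have "\<psi> c - b = - r" using calculation by simp
      ultimately show "\<exists>c. c \<in> C \<and> \<psi> c - b \<in> R2" using sR2 by (auto simp: real_vector.subspace_neg)
    qed
    then obtain cf where cf: "\<And>b. b \<in> B2 \<Longrightarrow> cf b \<in> C \<and> \<psi> (cf b) - b \<in> R2"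
      by metis
    define S where "S = span (cf ` B2)"
    have sS: "subspace S" by (simp add: S_def)
    have SC: "S \<subseteq> C" unfolding S_def using cf sC by (intro real_vector.span_minimal) auto
    have fdS: "fin_dim S" using B2(1) by (auto simp: fin_dim_def S_def)
    have dS: "dim S \<le> n"
    proof -
      have "dim S \<le> card (cf ` B2)" unfolding S_def
        using B2(1) by (intro real_vector.dim_le_card) auto
      also have "\<dots> \<le> card B2" using B2(1) by (rule card_image_le)
      finally show ?thesis using B2(4) S2(4) by simp
    qed
    have lift: "\<exists>s\<in>S. \<psi> s - s2 \<in> R2" if "s2 \<in> span B2" for s2
    proof (rule real_vector.span_induct[OF that, where P = "\<lambda>s2. \<exists>s\<in>S. \<psi> s - s2 \<in> R2"])
      show "subspace {s2. \<exists>s\<in>S. \<psi> s - s2 \<in> R2}"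
        unfolding subspace_def
      proof (intro conjI allI ballI impI)
        show "0 \<in> {s2. \<exists>s\<in>S. \<psi> s - s2 \<in> R2}"
          using sS sR2 lf by (auto intro!: bexI[of _ 0] simp: real_vector.subspace_0 real_vector.linear_0)
        fix x y assume x: "x \<in> {s2. \<exists>s\<in>S. \<psi> s - s2 \<in> R2}" and y: "y \<in> {s2. \<exists>s\<in>S. \<psi> s - s2 \<in> R2}"
        then obtain sx sy where h: "sx \<in> S" "\<psi> sx - x \<in> R2" "sy \<in> S" "\<psi> sy - y \<in> R2" by auto
        have e: "\<psi> (sx + sy) - (x + y) = (\<psi> sx - x) + (\<psi> sy - y)"
          using lf by (simp add: real_vector.linear_add algebra_simps)
        have "(\<psi> sx - x) + (\<psi> sy - y) \<in> R2"
          using h sR2 by (simp add: real_vector.subspace_add)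
        then have "\<psi> (sx + sy) - (x + y) \<in> R2" using e by (simp only:)
        moreover have "sx + sy \<in> S" using h sS by (simp add: real_vector.subspace_add)
        ultimately show "x + y \<in> {s2. \<exists>s\<in>S. \<psi> s - s2 \<in> R2}" by blast
      next
        fix c :: real and x assume x: "x \<in> {s2. \<exists>s\<in>S. \<psi> s - s2 \<in> R2}"
        then obtain sx where h: "sx \<in> S" "\<psi> sx - x \<in> R2" by auto
        have e: "\<psi> (c *\<^sub>R sx) - c *\<^sub>R x = c *\<^sub>R (\<psi> sx - x)"
          using lf by (simp add: real_vector.linear_scale scaleR_diff_right)
        have "\<psi> (c *\<^sub>R sx) - c *\<^sub>R x \<in> R2" unfolding e using h sR2 by (simp add: real_vector.subspace_scale)
        moreover have "c *\<^sub>R sx \<in> S" using h sS by (simp add: real_vector.subspace_scale)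
        ultimately show "c *\<^sub>R x \<in> {s2. \<exists>s\<in>S. \<psi> s - s2 \<in> R2}" by blast
      qed
      fix b assume "b \<in> B2"
      then show "\<exists>s\<in>S. \<psi> s - b \<in> R2" using cf unfolding S_def
        by (meson imageI real_vector.span_base)
    qed
    have "sum_set R S = C"
    proof
      show "sum_set R S \<subseteq> C"
      proof
        fix z assume "z \<in> sum_set R S"
        then obtain a b where "a \<in> R" "b \<in> S" "z = a + b" by (auto simp: mem_sum_set)
        then show "z \<in> C" using RC SC real_vector.subspace_add[OF sC] by blast
      qed
      show "C \<subseteq> sum_set R S"
      proof
        fix x assume xC: "x \<in> C"
        then have "\<psi> x \<in> sum_set R2 S2" using img S2(5) by auto
        then obtain r2 s2 where rs: "r2 \<in> R2" "s2 \<in> S2" "\<psi> x = r2 + s2" by (auto simp: mem_sum_set)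
        obtain s where s: "s \<in> S" "\<psi> s - s2 \<in> R2" using lift rs(2) B2(3) by blast
        have "\<psi> (x - s) = r2 - (\<psi> s - s2)" using lf rs(3) by (simp add: real_vector.linear_diff)
        then have "\<psi> (x - s) \<in> R2" using rs(1) s(2) sR2 by (simp add: real_vector.subspace_diff)
        moreover have "x - s \<in> C" using xC s(1) SC sC by (simp add: real_vector.subspace_diff subsetD)
        ultimately have "x - s \<in> R" using Rdef by simp
        then show "x \<in> sum_set R S" using s(1) unfolding mem_sum_set
          by (intro bexI[of _ "x - s"] bexI[of _ s]) auto
      qed
    qed
    then have "dim S \<in> compl_dims C R" using sS SC fdS by (auto simp: compl_dims_def)
    then show ?thesis using dS by blast
  qed
  have b: "\<exists>m\<in>compl_dims C2 R2. m \<le> n" if n: "n \<in> compl_dims C R" for n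
  proof -
    obtain S where S: "subspace S" "S \<subseteq> C" "fin_dim S" "dim S = n" "sum_set R S = C"
      using n by (auto simp: compl_dims_def)
    have sS2: "subspace (\<psi> ` S)" using lf S(1) by (rule real_vector.linear_subspace_image)
    have S2C2: "\<psi> ` S \<subseteq> C2" using S(2) img by auto
    have fd: "fin_dim (\<psi> ` S) \<and> dim (\<psi> ` S) \<le> dim S" by (rule dim_image_le_fd[OF lf S(3)])
    have "sum_set R2 (\<psi> ` S) = C2"
    proof
      show "sum_set R2 (\<psi> ` S) \<subseteq> C2"
      proof
        fix z assume "z \<in> sum_set R2 (\<psi> ` S)"
        then obtain a b where "a \<in> R2" "b \<in> \<psi> ` S" "z = a + b" by (auto simp: mem_sum_set)
        then show "z \<in> C2" using R2C2 S2C2 real_vector.subspace_add[OF sC2] by blast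
      qed
      show "C2 \<subseteq> sum_set R2 (\<psi> ` S)"
      proof
        fix y assume "y \<in> C2"
        then have "y \<in> sum_set (\<psi> ` C) R2" using cov by blast
        then obtain c r2 where cr: "c \<in> C" "r2 \<in> R2" "y = \<psi> c + r2" by (auto simp: mem_sum_set)
        then obtain r s where rs: "r \<in> R" "s \<in> S" "c = r + s" using S(5) by (auto simp: mem_sum_set)
        have "\<psi> r \<in> R2" using rs(1) Rdef by simp
        then have "\<psi> r + r2 \<in> R2" using cr(2) sR2 by (simp add: real_vector.subspace_add)
        moreover have "y = (\<psi> r + r2) + \<psi> s" using cr(3) rs(3) lf by (simp add: real_vector.linear_add algebra_simps)
        ultimately show "y \<in> sum_set R2 (\<psi> ` S)" using rs(2) by (auto simp: mem_sum_set)
      qed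
    qed
    then have "dim (\<psi> ` S) \<in> compl_dims C2 R2" using sS2 S2C2 fd by (auto simp: compl_dims_def)
    then show ?thesis using fd S(4) by auto
  qed
  show ?thesis using least_transfer[of "compl_dims C R" "compl_dims C2 R2"] a b
    by (simp add: finite_codim_eq codim_eq_least)
qed




lemma fredholm_pair_unfold:
  "fredholm_pair B B' \<longleftrightarrow> closed_subspace B \<and> closed_subspace B' \<and>
     fin_dim (B \<inter> B') \<and> closed (sum_set B B') \<and> finite_codim UNIV (sum_set B B')"
  by (simp add: fredholm_pair_def)

lemma closed_subspace_vimage:
  assumes "bounded_linear f" "closed_subspace B"
  shows "closed_subspace (f -` B)"
  using assms
  by (auto simp: closed_subspace_def bounded_linear.linear real_vector.linear_subspace_vimage
      intro!: closed_vimage linear_continuous_on)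

lemma pair_iso:
  fixes Q :: "'a::{real_inner,complete_space} \<Rightarrow> 'b::{real_inner,complete_space}"
  assumes bQ: "bounded_linear Q" and bQi: "bounded_linear Qi"
    and QiQ: "\<And>x. Qi (Q x) = x" and QQi: "\<And>y. Q (Qi y) = y"
    and cA: "closed_subspace A" and cB: "closed_subspace B"
  shows "(fredholm_pair A (Q -` B) \<longleftrightarrow> fredholm_pair (Q ` A) B)
     \<and> fredholm_pair_index A (Q -` B) = fredholm_pair_index (Q ` A) B"
proof -
  have lQ: "linear Q" using bQ by (rule bounded_linear.linear)
  have injQ: "inj Q" by (metis QiQ injI)
  have img: "Q ` X = Qi -` X" for X
  proof
    show "Q ` X \<subseteq> Qi -` X" using QiQ by auto
    show "Qi -` X \<subseteq> Q ` X"
    proof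
      fix y assume "y \<in> Qi -` X"
      then have "Qi y \<in> X" by simp
      then show "y \<in> Q ` X" using QQi[of y] by (metis imageI)
    qed
  qed
  have c1: "closed_subspace (Q -` B)" by (rule closed_subspace_vimage[OF bQ cB])
  have c2: "closed_subspace (Q ` A)" unfolding img by (rule closed_subspace_vimage[OF bQi cA])
  have sA: "subspace A" and sB: "subspace B" using cA cB by (auto simp: closed_subspace_def)
  have sQB: "subspace (Q -` B)" using c1 by (auto simp: closed_subspace_def)
  have int: "Q ` (A \<inter> Q -` B) = Q ` A \<inter> B" using injQ by (auto simp: image_iff)
  have sint: "subspace (A \<inter> Q -` B)" using sA sQB by (rule real_vector.subspace_inter)
  have dint: "(fin_dim (Q ` A \<inter> B) \<longleftrightarrow> fin_dim (A \<inter> Q -` B)) \<and> dim (Q ` A \<inter> B) = dim (A \<inter> Q -` B)"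
    using inj_image_dim[OF lQ sint] injQ int by (metis inj_on_subset subset_UNIV)
  define R where "R = sum_set A (Q -` B)"
  have sumeq: "Q ` R = sum_set (Q ` A) B"
  proof
    show "Q ` R \<subseteq> sum_set (Q ` A) B"
    proof
      fix z assume "z \<in> Q ` R"
      then obtain a b where ab: "a \<in> A" "Q b \<in> B" "z = Q (a + b)" by (auto simp: R_def mem_sum_set)
      then have "z = Q a + Q b" by (simp add: real_vector.linear_add[OF lQ])
      then show "z \<in> sum_set (Q ` A) B" using ab unfolding mem_sum_set by blast
    qed
    show "sum_set (Q ` A) B \<subseteq> Q ` R"
    proof
      fix z assume "z \<in> sum_set (Q ` A) B"
      then obtain a b where ab: "a \<in> A" "b \<in> B" "z = Q a + b" by (auto simp: mem_sum_set)
      then have "a + Qi b \<in> R" unfolding R_def mem_sum_set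
        by (intro bexI[of _ a] bexI[of _ "Qi b"]) (auto simp: QQi)
      moreover have "Q (a + Qi b) = z" using ab by (simp add: real_vector.linear_add[OF lQ] QQi)
      ultimately show "z \<in> Q ` R" by blast
    qed
  qed
  have sR: "subspace R" unfolding R_def by (rule subspace_sum_set[OF sA sQB])
  have sQR: "subspace (Q ` R)" using lQ sR by (rule real_vector.linear_subspace_image)
  have clo: "closed R \<longleftrightarrow> closed (Q ` R)"
  proof
    assume "closed R" then show "closed (Q ` R)" unfolding img
      by (intro closed_vimage linear_continuous_on bQi)
  next
    assume "closed (Q ` R)"
    then have "closed (Q -` (Q ` R))" by (intro closed_vimage linear_continuous_on bQ)
    moreover have "Q -` (Q ` R) = R" using injQ by (auto simp: inj_def)
    ultimately show "closed R" by simp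
  qed
  have cod: "(finite_codim UNIV R \<longleftrightarrow> finite_codim UNIV (Q ` R)) \<and> codim UNIV R = codim UNIV (Q ` R)"
  proof (rule codim_transfer[OF lQ])
    show "UNIV \<subseteq> sum_set (Q ` UNIV) (Q ` R)"
    proof
      fix y
      have "0 \<in> Q ` R" using sQR by (simp add: real_vector.subspace_0)
      moreover have "y = Q (Qi y) + 0" by (simp add: QQi)
      moreover have "Q (Qi y) \<in> Q ` UNIV" by blast
      ultimately show "y \<in> sum_set (Q ` UNIV) (Q ` R)" unfolding mem_sum_set by blast
    qed
    show "R = {x \<in> UNIV. Q x \<in> Q ` R}" using injQ by (auto simp: inj_def)
  qed (auto simp: sQR)
  show ?thesis
    unfolding fredholm_pair_unfold fredholm_pair_index_def
    using c1 c2 cA cB dint clo cod sumeq by (simp add: R_def)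
qed

theorem proposition3p4:
  fixes L :: "'e::{real_inner,complete_space} \<Rightarrow> 'f::{real_inner,complete_space}"
    and r0 :: "'e \<Rightarrow> 'h0::{real_inner,complete_space}"
    and r1 :: "'e \<Rightarrow> 'h1::{real_inner,complete_space}"
    and Q :: "'h0 \<Rightarrow> 'h1"
    and B0 :: "'h0 set" and B1 :: "'h1 set" and k :: int
  assumes "bounded_linear L" and "bounded_linear r0" and "bounded_linear r1"
    and "bij (\<lambda>x. (r0 x, L x))" and "bij (\<lambda>x. (r1 x, L x))"
    and Q_def: "Q = r1 \<circ> inv_into {x. L x = 0} r0"
    and "surj (\<lambda>x. (r0 x, r1 x))"
    and "closed_subspace B0" and "closed_subspace B1"
  shows "((fredholm_pair B0 (Q -` B1) \<and> fredholm_pair_index B0 (Q -` B1) = k)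
            \<longleftrightarrow> (fredholm_pair (Q ` B0) B1 \<and> fredholm_pair_index (Q ` B0) B1 = k))
       \<and> ((fredholm_pair B0 (Q -` B1) \<and> fredholm_pair_index B0 (Q -` B1) = k)
            \<longleftrightarrow> (fredholm_op UNIV (orthogonal_comp B0 \<times> orthogonal_comp B1 \<times> UNIV)
                   (\<lambda>x. (orth_proj (orthogonal_comp B0) (r0 x), orth_proj (orthogonal_comp B1) (r1 x), L x))
                 \<and> fredholm_op_index UNIV (orthogonal_comp B0 \<times> orthogonal_comp B1 \<times> UNIV)
                   (\<lambda>x. (orth_proj (orthogonal_comp B0) (r0 x), orth_proj (orthogonal_comp B1) (r1 x), L x)) = k))
       \<and> ((fredholm_pair B0 (Q -` B1) \<and> fredholm_pair_index B0 (Q -` B1) = k)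
            \<longleftrightarrow> (fredholm_op {x. orth_proj (orthogonal_comp B0) (r0 x) = 0 \<and> orth_proj (orthogonal_comp B1) (r1 x) = 0} UNIV L
                 \<and> fredholm_op_index {x. orth_proj (orthogonal_comp B0) (r0 x) = 0 \<and> orth_proj (orthogonal_comp B1) (r1 x) = 0} UNIV L = k))"
proof -
  note bL = assms(1) and br0 = assms(2) and br1 = assms(3)
  note cB0 = assms(8) and cB1 = assms(9)
  have lL: "linear L" and lr0: "linear r0" and lr1: "linear r1"
    using bL br0 br1 by (auto intro: bounded_linear.linear)
  have sB0: "subspace B0" and sB1: "subspace B1" using cB0 cB1 by (auto simp: closed_subspace_def)
  have clB0: "closed B0" and clB1: "closed B1" using cB0 cB1 by (auto simp: closed_subspace_def)
  define G0 where "G0 = (\<lambda>x. (r0 x, L x))"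
  define G1 where "G1 = (\<lambda>x. (r1 x, L x))"
  have bG0: "bounded_linear G0" unfolding G0_def by (intro bounded_linear_Pair br0 bL)
  have bG1: "bounded_linear G1" unfolding G1_def by (intro bounded_linear_Pair br1 bL)
  have bijG0: "bij G0" and bijG1: "bij G1" using assms(4,5) by (simp_all add: G0_def G1_def)
  have biG0: "bounded_linear (inv G0)" by (rule bounded_inverse[OF bG0 bijG0])
  have biG1: "bounded_linear (inv G1)" by (rule bounded_inverse[OF bG1 bijG1])
  have G0I: "G0 (inv G0 p) = p" for p using bijG0 by (simp add: bij_def surj_f_inv_f)
  have IG0: "inv G0 (G0 x) = x" for x using bijG0 by (simp add: bij_def)
  have G1I: "G1 (inv G1 p) = p" for p using bijG1 by (simp add: bij_def surj_f_inv_f)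
  have IG1: "inv G1 (G1 x) = x" for x using bijG1 by (simp add: bij_def)
  have G0I_r0: "r0 (inv G0 (u, v)) = u" and G0I_L: "L (inv G0 (u, v)) = v" for u v
    using G0I[of "(u, v)"] by (simp_all add: G0_def)
  have G1I_r1: "r1 (inv G1 (u, v)) = u" and G1I_L: "L (inv G1 (u, v)) = v" for u v
    using G1I[of "(u, v)"] by (simp_all add: G1_def)
  define K where "K = {x. L x = 0}"
  have injK: "inj_on r0 K"
  proof (rule inj_onI)
    fix x y assume "x \<in> K" "y \<in> K" "r0 x = r0 y"
    then have "G0 x = G0 y" by (simp add: G0_def K_def)
    then show "x = y" by (metis IG0)
  qed
  have Qeq: "Q u = r1 (inv G0 (u, 0))" for u
  proof -
    have xK: "inv G0 (u, 0) \<in> K" by (simp add: K_def G0I_L)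
    have "inv_into K r0 u = inv G0 (u, 0)"
      using inv_into_f_f[OF injK xK] by (simp add: G0I_r0)
    then show ?thesis by (simp add: Q_def K_def)
  qed
  define Qi where "Qi = (\<lambda>v. r0 (inv G1 (v, 0)))"
  have bp0: "bounded_linear (\<lambda>u::'h0. (u, 0::'f))"
    by (intro bounded_linear_Pair bounded_linear_ident bounded_linear_zero)
  have bp1: "bounded_linear (\<lambda>u::'h1. (u, 0::'f))"
    by (intro bounded_linear_Pair bounded_linear_ident bounded_linear_zero)
  have bQ: "bounded_linear Q"
  proof -
    have "Q = (\<lambda>u. r1 (inv G0 (u, 0)))" by (rule ext) (simp add: Qeq)
    moreover have "bounded_linear (\<lambda>u. r1 (inv G0 (u, 0)))"
      by (rule bounded_linear_compose[OF br1 bounded_linear_compose[OF biG0 bp0]])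
    ultimately show ?thesis by simp
  qed
  have bQi: "bounded_linear Qi"
  proof -
    show ?thesis unfolding Qi_def
      by (rule bounded_linear_compose[OF br0 bounded_linear_compose[OF biG1 bp1]])
  qed
  have lQ: "linear Q" and lQi: "linear Qi" using bQ bQi by (auto intro: bounded_linear.linear)
  have QK: "Q (r0 x) = r1 x" if "L x = 0" for x
  proof -
    have "inv G0 (r0 x, 0) = x" using IG0[of x] that by (simp add: G0_def)
    then show ?thesis by (simp add: Qeq)
  qed
  have QiK: "Qi (r1 x) = r0 x" if "L x = 0" for x
  proof -
    have "inv G1 (r1 x, 0) = x" using IG1[of x] that by (simp add: G1_def)
    then show ?thesis by (simp add: Qi_def)
  qed
  have QQi: "Q (Qi v) = v" for v
    unfolding Qi_def by (subst QK) (simp_all add: G1I_L G1I_r1)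
  have QiQ: "Qi (Q u) = u" for u
    unfolding Qeq by (subst QiK) (simp_all add: G0I_L G0I_r0)
  have surjr: "\<exists>x. r0 x = a \<and> r1 x = b" for a b
  proof -
    obtain x where "(a, b) = (r0 x, r1 x)" using assms(7) by (blast dest: surjD)
    then show ?thesis by auto
  qed
  have part12: "(fredholm_pair B0 (Q -` B1) \<and> fredholm_pair_index B0 (Q -` B1) = k)
            \<longleftrightarrow> (fredholm_pair (Q ` B0) B1 \<and> fredholm_pair_index (Q ` B0) B1 = k)"
    using pair_iso[OF bQ bQi QiQ QQi cB0 cB1] by auto
  define D where "D = {x. r0 x \<in> B0 \<and> r1 x \<in> B1}"
  have sQB1: "subspace (Q -` B1)" by (rule real_vector.linear_subspace_vimage[OF lQ sB1])
  define S where "S = sum_set B0 (Q -` B1)"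
  have sS: "subspace S" unfolding S_def by (rule subspace_sum_set[OF sB0 sQB1])
  define x0 where "x0 f = inv G0 (0, f)" for f
  have x0r: "r0 (x0 f) = 0" and x0L: "L (x0 f) = f" for f by (simp_all add: x0_def G0I_r0 G0I_L)
  define \<psi> where "\<psi> f = Qi (r1 (x0 f))" for f
  have bpf: "bounded_linear (\<lambda>f::'f. (0::'h0, f))"
    by (intro bounded_linear_Pair bounded_linear_ident bounded_linear_zero)
  have b\<psi>: "bounded_linear \<psi>"
    unfolding \<psi>_def x0_def
    by (rule bounded_linear_compose[OF bQi bounded_linear_compose[OF br1 bounded_linear_compose[OF biG0 bpf]]])
  have l\<psi>: "linear \<psi>" using b\<psi> by (rule bounded_linear.linear)
  have LD: "L ` D = {f. \<psi> f \<in> S}"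
  proof
    show "L ` D \<subseteq> {f. \<psi> f \<in> S}"
    proof
      fix f assume "f \<in> L ` D"
      then obtain x where x: "r0 x \<in> B0" "r1 x \<in> B1" "f = L x" by (auto simp: D_def)
      define kk where "kk = x - x0 f"
      have Lk: "L kk = 0" using x(3) by (simp add: kk_def real_vector.linear_diff[OF lL] x0L)
      have r0k: "r0 kk = r0 x" by (simp add: kk_def real_vector.linear_diff[OF lr0] x0r)
      have r1x: "r1 x = r1 (x0 f) + r1 kk" by (simp add: kk_def real_vector.linear_diff[OF lr1])
      have "Qi (r1 x) = \<psi> f + r0 x"
        using r1x QiK[OF Lk] r0k by (simp add: \<psi>_def real_vector.linear_add[OF lQi])
      then have e: "\<psi> f = (- r0 x) + Qi (r1 x)" by (simp add: algebra_simps)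
      have "- r0 x \<in> B0" using x(1) sB0 by (simp add: real_vector.subspace_neg)
      moreover have "Qi (r1 x) \<in> Q -` B1" using x(2) by (simp add: QQi)
      ultimately show "f \<in> {f. \<psi> f \<in> S}" using e unfolding S_def mem_sum_set by blast
    qed
    show "{f. \<psi> f \<in> S} \<subseteq> L ` D"
    proof
      fix f assume "f \<in> {f. \<psi> f \<in> S}"
      then obtain u w where uw: "u \<in> B0" "Q w \<in> B1" "\<psi> f = u + w" by (auto simp: S_def mem_sum_set)
      define kk where "kk = inv G0 (- u, 0)"
      have Lk: "L kk = 0" and r0k: "r0 kk = - u" by (simp_all add: kk_def G0I_L G0I_r0)
      define x where "x = x0 f + kk"
      have Lx: "L x = f" by (simp add: x_def real_vector.linear_add[OF lL] x0L Lk)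
      have r0x: "r0 x = - u" by (simp add: x_def real_vector.linear_add[OF lr0] x0r r0k)
      have "r1 x = r1 (x0 f) + r1 kk" by (simp add: x_def real_vector.linear_add[OF lr1])
      also have "r1 kk = Q (- u)" using QK[OF Lk] r0k by simp
      also have "r1 (x0 f) = Q (\<psi> f)" by (simp add: \<psi>_def QQi)
      finally have "r1 x = Q (\<psi> f + - u)" by (simp only: real_vector.linear_add[OF lQ])
      then have "r1 x = Q w" using uw(3) by simp
      then have "x \<in> D" using uw r0x sB0 by (simp add: D_def real_vector.subspace_neg)
      then show "f \<in> L ` D" using Lx by (metis imageI)
    qed
  qed
  have surj\<psi>: "\<exists>f. \<psi> f = u" for u
  proof -
    obtain x where x: "r0 x = 0" "r1 x = Q u" using surjr by blast
    have "x0 (L x) = x" using IG0[of x] x by (simp add: x0_def G0_def)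
    then have "\<psi> (L x) = u" using x by (simp add: \<psi>_def QiQ)
    then show ?thesis by blast
  qed
  have s\<psi>: "surj \<psi>" using surj\<psi> by (metis surjI)
  have kerD: "r0 ` {x\<in>D. L x = 0} = B0 \<inter> Q -` B1"
  proof
    show "r0 ` {x\<in>D. L x = 0} \<subseteq> B0 \<inter> Q -` B1" using QK by (auto simp: D_def)
    show "B0 \<inter> Q -` B1 \<subseteq> r0 ` {x\<in>D. L x = 0}"
    proof
      fix u assume u: "u \<in> B0 \<inter> Q -` B1"
      define x where "x = inv G0 (u, 0)"
      have "L x = 0" "r0 x = u" "r1 x = Q u" by (simp_all add: x_def G0I_L G0I_r0 Qeq)
      then show "u \<in> r0 ` {x\<in>D. L x = 0}" using u by (auto simp: D_def intro!: image_eqI[of _ _ x])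
    qed
  qed
  have injker: "inj_on r0 {x\<in>D. L x = 0}" using injK by (rule inj_on_subset) (auto simp: K_def)
  have sD: "subspace D"
  proof -
    have "D = r0 -` B0 \<inter> r1 -` B1" by (auto simp: D_def)
    then show ?thesis
      using real_vector.linear_subspace_vimage[OF lr0 sB0] real_vector.linear_subspace_vimage[OF lr1 sB1]
      by (simp add: real_vector.subspace_inter)
  qed
  have skerD: "subspace {x\<in>D. L x = 0}"
  proof -
    have "{x\<in>D. L x = 0} = D \<inter> L -` {0}" by auto
    moreover have "subspace (L -` {0})"
      by (rule real_vector.linear_subspace_vimage[OF lL real_vector.subspace_single_0])
    ultimately show ?thesis using sD by (simp add: real_vector.subspace_inter)
  qed
  have dimker: "(fin_dim (B0 \<inter> Q -` B1) \<longleftrightarrow> fin_dim {x\<in>D. L x = 0}) \<and> dim (B0 \<inter> Q -` B1) = dim {x\<in>D. L x = 0}"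
    using inj_image_dim[OF lr0 skerD injker] unfolding kerD .
  have cD: "closed_subspace D"
  proof -
    have "D = r0 -` B0 \<inter> r1 -` B1" by (auto simp: D_def)
    moreover have "closed (r0 -` B0)" "closed (r1 -` B1)"
      using clB0 clB1 by (auto intro!: closed_vimage linear_continuous_on br0 br1)
    ultimately show ?thesis using sD by (auto simp: closed_subspace_def)
  qed
  have clo14: "closed (L ` D) \<longleftrightarrow> closed S"
  proof
    assume "closed S"
    then have "closed (\<psi> -` S)" by (intro closed_vimage linear_continuous_on b\<psi>)
    moreover have "\<psi> -` S = L ` D" using LD by auto
    ultimately show "closed (L ` D)" by simp
  next
    assume c: "closed (L ` D)"
    have "closed (\<psi> ` (L ` D))"
    proof (rule open_mapping_closed_saturated[OF b\<psi> s\<psi> c])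
      fix f f' assume "\<psi> f = \<psi> f'" "f \<in> L ` D"
      then show "f' \<in> L ` D" using LD by auto
    qed
    moreover have "\<psi> ` (L ` D) = S"
    proof
      show "\<psi> ` (L ` D) \<subseteq> S" using LD by auto
      show "S \<subseteq> \<psi> ` (L ` D)"
      proof
        fix u assume u: "u \<in> S"
        obtain f where "\<psi> f = u" using surj\<psi> by blast
        with u LD show "u \<in> \<psi> ` (L ` D)" by auto
      qed
    qed
    ultimately show "closed S" by simp
  qed
  have cod14: "(finite_codim UNIV (L ` D) \<longleftrightarrow> finite_codim UNIV S) \<and> codim UNIV (L ` D) = codim UNIV S"
  proof (rule codim_transfer[OF l\<psi>])
    show "UNIV \<subseteq> sum_set (\<psi> ` UNIV) S"
    proof
      fix y :: 'h0
      obtain f where "\<psi> f = y" using surj\<psi> by blast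
      moreover have "0 \<in> S" using sS by (simp add: real_vector.subspace_0)
      ultimately show "y \<in> sum_set (\<psi> ` UNIV) S" unfolding mem_sum_set
        by (metis add.right_neutral rangeI)
    qed
    show "L ` D = {x \<in> UNIV. \<psi> x \<in> S}" using LD by simp
  qed (auto simp: sS)
  have csU: "closed_subspace (UNIV :: 'f set)" by (simp add: closed_subspace_def)
  have part14: "(fredholm_pair B0 (Q -` B1) \<and> fredholm_pair_index B0 (Q -` B1) = k)
      \<longleftrightarrow> (fredholm_op D UNIV L \<and> fredholm_op_index D UNIV L = k)"
    unfolding fredholm_pair_unfold fredholm_op_def fredholm_pair_index_def fredholm_op_index_def
    using cB0 closed_subspace_vimage[OF bQ cB1] dimker clo14 cod14 cD csU bL
    by (auto simp: S_def)
  have DD: "{x. orth_proj (orthogonal_comp B0) (r0 x) = 0 \<and> orth_proj (orthogonal_comp B1) (r1 x) = 0} = D"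
    using orth_proj_perp_zero[OF cB0] orth_proj_perp_zero[OF cB1] by (simp add: D_def)
  define P0 where "P0 = orth_proj (orthogonal_comp B0)"
  define P1 where "P1 = orth_proj (orthogonal_comp B1)"
  define T where "T = (\<lambda>x. (P0 (r0 x), P1 (r1 x), L x))"
  define Ct where "Ct = orthogonal_comp B0 \<times> orthogonal_comp B1 \<times> (UNIV :: 'f set)"
  have cO0: "closed_subspace (orthogonal_comp B0)" and cO1: "closed_subspace (orthogonal_comp B1)"
    by (rule closed_subspace_orthogonal_comp)+
  have bP0: "bounded_linear P0" and bP1: "bounded_linear P1"
    unfolding P0_def P1_def by (rule orth_proj_bounded_linear[OF cO0], rule orth_proj_bounded_linear[OF cO1])
  have lP0: "linear P0" and lP1: "linear P1" using bP0 bP1 by (auto intro: bounded_linear.linear)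
  have P0mem: "P0 z \<in> orthogonal_comp B0" and P1mem: "P1 w \<in> orthogonal_comp B1" for z w
    unfolding P0_def P1_def using orth_proj_props[OF cO0] orth_proj_props[OF cO1] by auto
  have P0id: "a \<in> orthogonal_comp B0 \<Longrightarrow> P0 a = a" and P1id: "b \<in> orthogonal_comp B1 \<Longrightarrow> P1 b = b" for a b
    unfolding P0_def P1_def using orth_proj_id[OF cO0] orth_proj_id[OF cO1] by auto
  have P0z: "P0 z = 0 \<longleftrightarrow> z \<in> B0" and P1z: "P1 w = 0 \<longleftrightarrow> w \<in> B1" for z w
    unfolding P0_def P1_def using orth_proj_perp_zero[OF cB0] orth_proj_perp_zero[OF cB1] by auto
  have bT: "bounded_linear T" unfolding T_def
    by (intro bounded_linear_Pair bounded_linear_compose[OF bP0 br0] bounded_linear_compose[OF bP1 br1] bL)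
  have lT: "linear T" using bT by (rule bounded_linear.linear)
  have sO0: "subspace (orthogonal_comp B0)" and sO1: "subspace (orthogonal_comp B1)"
    using cO0 cO1 by (auto simp: closed_subspace_def)
  have cCt: "closed_subspace Ct" unfolding Ct_def closed_subspace_def
    using cO0 cO1 by (auto simp: closed_subspace_def intro!: real_vector.subspace_Times closed_Times)
  have rT: "range T \<subseteq> Ct" by (auto simp: T_def Ct_def P0mem P1mem)
  have kerT: "{x\<in>UNIV. T x = 0} = {x\<in>D. L x = 0}"
    by (auto simp: T_def D_def P0z P1z zero_prod_def)
  define \<psi>2 where "\<psi>2 f = ((0::'h0), (0::'h1), f)" for f :: 'f
  have b\<psi>2: "bounded_linear \<psi>2" unfolding \<psi>2_def
    by (intro bounded_linear_Pair bounded_linear_ident bounded_linear_zero)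
  have l\<psi>2: "linear \<psi>2" using b\<psi>2 by (rule bounded_linear.linear)
  have RT: "L ` D = {f \<in> UNIV. \<psi>2 f \<in> range T}"
  proof
    show "L ` D \<subseteq> {f \<in> UNIV. \<psi>2 f \<in> range T}"
    proof
      fix f assume "f \<in> L ` D"
      then obtain x where "x \<in> D" "f = L x" by auto
      then have "T x = \<psi>2 f" by (auto simp: T_def \<psi>2_def D_def P0z P1z)
      then show "f \<in> {f \<in> UNIV. \<psi>2 f \<in> range T}" by (metis (mono_tags, lifting) UNIV_I mem_Collect_eq rangeI)
    qed
    show "{f \<in> UNIV. \<psi>2 f \<in> range T} \<subseteq> L ` D"
    proof
      fix f assume "f \<in> {f \<in> UNIV. \<psi>2 f \<in> range T}"
      then obtain x where "\<psi>2 f = T x" by auto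
      then have "x \<in> D" "L x = f" by (auto simp: T_def \<psi>2_def D_def P0z[symmetric] P1z[symmetric])
      then show "f \<in> L ` D" by auto
    qed
  qed
  have sRT: "subspace (range T)" by (rule real_vector.linear_subspace_image[OF lT real_vector.subspace_UNIV])
  have sCt: "subspace Ct" using cCt by (simp add: closed_subspace_def)
  have imgpsi2: "\<psi>2 ` UNIV \<subseteq> Ct"
    using sO0 sO1 by (auto simp: \<psi>2_def Ct_def real_vector.subspace_0)
  have covT: "Ct \<subseteq> sum_set (\<psi>2 ` UNIV) (range T)"
  proof
    fix z assume z: "z \<in> Ct"
    then obtain a b f where abf: "z = (a, b, f)" "a \<in> orthogonal_comp B0" "b \<in> orthogonal_comp B1"
      by (auto simp: Ct_def)
    obtain x where x: "r0 x = a" "r1 x = b" using surjr by blast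
    have Tx: "T x = (a, b, L x)" using x abf P0id P1id by (simp add: T_def)
    have "z = \<psi>2 (f - L x) + T x" using abf Tx by (simp add: \<psi>2_def)
    then show "z \<in> sum_set (\<psi>2 ` UNIV) (range T)" unfolding mem_sum_set by blast
  qed
  have cod34: "(finite_codim UNIV (L ` D) \<longleftrightarrow> finite_codim Ct (range T)) \<and> codim UNIV (L ` D) = codim Ct (range T)"
    by (rule codim_transfer[OF l\<psi>2 real_vector.subspace_UNIV sCt sRT rT imgpsi2 covT RT])
  have sLD: "subspace (L ` D)" by (rule real_vector.linear_subspace_image[OF lL sD])
  have clo34: "closed (range T) \<longleftrightarrow> closed (L ` D)"
  proof
    assume "closed (range T)"
    then have "closed (\<psi>2 -` range T)" by (intro closed_vimage linear_continuous_on b\<psi>2)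
    moreover have "\<psi>2 -` range T = L ` D" using RT by auto
    ultimately show "closed (L ` D)" by simp
  next
    assume cLD: "closed (L ` D)"
    define \<Omega> where "\<Omega> = (\<lambda>p::'e \<times> 'f. (r0 (fst p), r1 (fst p), snd p))"
    have b\<Omega>: "bounded_linear \<Omega>" unfolding \<Omega>_def
      by (intro bounded_linear_Pair bounded_linear_compose[OF br0 bounded_linear_fst]
          bounded_linear_compose[OF br1 bounded_linear_fst] bounded_linear_snd)
    have s\<Omega>: "surj \<Omega>"
      unfolding surj_def
    proof
      fix z :: "'h0 \<times> 'h1 \<times> 'f"
      obtain x where x: "r0 x = fst z" "r1 x = fst (snd z)" using surjr by blast
      have "z = \<Omega> (x, snd (snd z))" using x by (simp add: \<Omega>_def)
      then show "\<exists>p. z = \<Omega> p" by blast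
    qed
    define Z where "Z = (\<lambda>p::'e \<times> 'f. snd p - L (fst p)) -` (L ` D)"
    have bz: "bounded_linear (\<lambda>p::'e \<times> 'f. snd p - L (fst p))"
      by (intro bounded_linear_sub bounded_linear_snd bounded_linear_compose[OF bL bounded_linear_fst])
    have cZ: "closed Z" unfolding Z_def using cLD by (intro closed_vimage linear_continuous_on bz)
    have cOZ: "closed (\<Omega> ` Z)"
    proof (rule open_mapping_closed_saturated[OF b\<Omega> s\<Omega> cZ])
      fix p p' assume e: "\<Omega> p = \<Omega> p'" and pZ: "p \<in> Z"
      obtain x f where p: "p = (x, f)" by (cases p)
      obtain x' f' where p': "p' = (x', f')" by (cases p')
      have ee: "r0 x = r0 x'" "r1 x = r1 x'" "f = f'" using e by (auto simp: \<Omega>_def p p')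
      have "r0 (x - x') = 0" "r1 (x - x') = 0"
        using ee by (simp_all add: real_vector.linear_diff[OF lr0] real_vector.linear_diff[OF lr1])
      then have "x - x' \<in> D" using sB0 sB1 by (simp add: D_def real_vector.subspace_0)
      then have "L (x - x') \<in> L ` D" by blast
      moreover have "f - L x \<in> L ` D" using pZ by (simp add: Z_def p)
      ultimately have "(f - L x) + L (x - x') \<in> L ` D" using sLD by (simp add: real_vector.subspace_add)
      moreover have "(f - L x) + L (x - x') = f' - L x'"
        using ee by (simp add: real_vector.linear_diff[OF lL])
      ultimately show "p' \<in> Z" by (simp add: Z_def p')
    qed
    have "range T = Ct \<inter> \<Omega> ` Z"
    proof
      show "range T \<subseteq> Ct \<inter> \<Omega> ` Z"
      proof
        fix z assume "z \<in> range T"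
        then obtain x where zx: "z = T x" by auto
        obtain y where y: "r0 y = P0 (r0 x)" "r1 y = P1 (r1 x)" using surjr by blast
        have "P0 (r0 (x - y)) = 0"
          using y P0id[OF P0mem] by (simp add: real_vector.linear_diff[OF lr0] real_vector.linear_diff[OF lP0])
        moreover have "P1 (r1 (x - y)) = 0"
          using y P1id[OF P1mem] by (simp add: real_vector.linear_diff[OF lr1] real_vector.linear_diff[OF lP1])
        ultimately have "x - y \<in> D" by (simp add: D_def P0z P1z)
        then have "L x - L y \<in> L ` D" by (metis imageI real_vector.linear_diff[OF lL])
        then have "(y, L x) \<in> Z" by (simp add: Z_def)
        moreover have "\<Omega> (y, L x) = z" using y zx by (simp add: \<Omega>_def T_def)
        ultimately have "z \<in> \<Omega> ` Z" by (metis imageI)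
        moreover have "z \<in> Ct" using rT zx by auto
        ultimately show "z \<in> Ct \<inter> \<Omega> ` Z" by blast
      qed
      show "Ct \<inter> \<Omega> ` Z \<subseteq> range T"
      proof
        fix z assume z: "z \<in> Ct \<inter> \<Omega> ` Z"
        then obtain p where pZ: "p \<in> Z" and zp: "z = \<Omega> p" by auto
        obtain x f where p: "p = (x, f)" by (cases p)
        obtain d where d: "d \<in> D" "f - L x = L d" using pZ by (auto simp: Z_def p)
        have zz: "z = (r0 x, r1 x, f)" using zp p by (simp add: \<Omega>_def)
        then have a: "r0 x \<in> orthogonal_comp B0" and b: "r1 x \<in> orthogonal_comp B1"
          using z by (auto simp: Ct_def)
        have "P0 (r0 d) = 0" "P1 (r1 d) = 0" using d(1) by (simp_all add: D_def P0z P1z)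
        then have "T (x + d) = (r0 x, r1 x, f)" using d(2) P0id[OF a] P1id[OF b]
          by (simp add: T_def real_vector.linear_add[OF lr0] real_vector.linear_add[OF lr1]
              real_vector.linear_add[OF lP0] real_vector.linear_add[OF lP1] real_vector.linear_add[OF lL] algebra_simps)
        then show "z \<in> range T" using zz by (metis rangeI)
      qed
    qed
    moreover have "closed Ct" using cCt by (simp add: closed_subspace_def)
    ultimately show "closed (range T)" using cOZ by (simp add: closed_Int)
  qed
  have part34: "(fredholm_op UNIV Ct T \<and> fredholm_op_index UNIV Ct T = k)
      \<longleftrightarrow> (fredholm_op D UNIV L \<and> fredholm_op_index D UNIV L = k)"
  proof -
    have csE: "closed_subspace (UNIV :: 'e set)" by (simp add: closed_subspace_def)
    show ?thesis
      unfolding fredholm_op_def fredholm_op_index_def kerT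
      using csE csU cCt bT rT clo34 cod34 cD bL by auto
  qed
  show ?thesis
    using part12 part14 part34 unfolding DD T_def Ct_def P0_def P1_def by simp
qed


end
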